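(* Let $(\mathbf f,\mathbf g),(\mathbf f',\mathbf g')$ be models with $p=p_{\mathbf f,\mathbf g}$, $p'=p_{\mathbf f',\mathbf g'}$, and assume: (1) distinct labels $y_1,\dots,y_M\in\mathcal Y_{\mathrm{LLV}}\setminus\{y_0\}$ and distinct inputs $x_1,\dots,x_M\in\mathcal X_{\mathrm{LLV}}\setminus\{x_0\}$ are chosen such that $\mathbf L=[\mathbf g_0(y_1),\dots,\mathbf g_0(y_M)]$, $\mathbf L'=[\mathbf g'_0(y_1),\dots,\mathbf g'_0(y_M)]$, $\mathbf N=[\mathbf f_0(x_1),\dots,\mathbf f_0(x_M)]$, $\mathbf N'=[\mathbf f'_0(x_1),\dots,\mathbf f'_0(x_M)]$ are all invertible; (2) $p$ and $p'$ are both admissible; (3) with $x\sim p_{\mathcal D}$ and $y$ uniform on $\mathcal Y$, and $\mathbf z_1=\mathbf L^\top\mathbf f(x)$, $\mathbf z_2=\mathbf L'^\top\mathbf f'(x)$, $\mathbf w_1=\mathbf N^\top\mathbf g(y)$, $\mathbf w_2=\mathbf N'^\top\mathbf g'(y)$, the covariance matrices of the standardized vectors $\boldsymbol\Sigma_{\mathbf z_1'\mathbf z_1'},\boldsymbol\Sigma_{\mathbf w_1'\mathbf w_1'}$ and cross-covariance matrices $\boldsymbol\Sigma_{\mathbf z_1'\mathbf z_2'},\boldsymbol\Sigma_{\mathbf w_1'\mathbf w_2'}$ are non-singular. Then for every $\lambda>0$ and $\epsilon\ge0$, $$d^\lambda_{\mathrm{LLV}}(p,p')\le\epsilon\ \Longrightarrow\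 \max\big\{d_{\mathrm{SVD}}(\mathbf z_1,\mathbf z_2),\,d_{\mathrm{SVD}}(\mathbf w_1,\mathbf w_2)\big\}\le 2M\epsilon .$$
   Context: Let $\mathcal X$ be a set of inputs and $\mathcal Y$ a finite set of labels; fix $M\ge 1$. A model is a pair $(\mathbf f,\mathbf g)$ of functions $\mathbf f:\mathcal X\to\mathbb R^M$ (embedding) and $\mathbf g:\mathcal Y\to\mathbb R^M$ (unembedding); it defines $p_{\mathbf f,\mathbf g}(y\mid x)=\exp(\mathbf f(x)^\top\mathbf g(y))/\sum_{y'\in\mathcal Y}\exp(\mathbf f(x)^\top\mathbf g(y'))$. With pivot input $x_0$ and pivot label $y_0$, write $\mathbf f_0(x)=\mathbf f(x)-\mathbf f(x_0)$, $\mathbf g_0(y)=\mathbf g(y)-\mathbf g(y_0)$ (similarly primed). Fix a probability distribution $p_{\mathcal D}$ on $\mathcal X$; $\mathrm{Var}_x$ denotes variance with $x\sim p_{\mathcal D}$ and $\mathrm{Var}_y$ variance with $y$ uniform on $\mathcal Y$. Fix a finite set $\mathcal X_{\mathrm{LLV}}\subset\mathcal X$ containing $x_0$, and a set $\mathcal Y_{\mathrm{LLV}}\subset\mathcal Y$ containing $y_0$ and all labels of $\mathcal Y$ except exactly one. Consider conditional distributions $p(\cdot\mid x)$ on $\mathcal Y$ with all probabilities positive and $\log p(y\mid\cdot)$ square-integrable under $p_{\mathcal D}$. Define $\psi_x(y;p)=\sqrt{\mathrm{Var}_x[\log p(y\mid x)-\log p(y_0\mid x)]}$ and $\psi_y(x;p)=\sqrt{\mathrm{Var}_y[\log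 p(y\mid x)-\log p(y\mid x_0)]}$. Such a $p$ is admissible if (1) $p_{\mathcal D}(\{x\})>0$ for every $x\in\mathcal X_{\mathrm{LLV}}$, and for every $x\in\mathcal X_{\mathrm{LLV}}\setminus\{x_0\}$ the map $y\mapsto\log p(y\mid x)-\log p(y\mid x_0)$ is not constant on $\mathcal Y$; and (2) for every $y\in\mathcal Y_{\mathrm{LLV}}\setminus\{y_0\}$, $\mathrm{Var}_x[\log p(y\mid x)-\log p(y_0\mid x)]>0$. For admissible $p,p'$ and $\lambda>0$ define $t_1=\max_{y\in\mathcal Y_{\mathrm{LLV}}\setminus\{y_0\}}\max\Big\{\sqrt{\mathrm{Var}_x\big[\tfrac{\log p(y\mid x)}{\psi_x(y;p)}-\tfrac{\log p'(y\mid x)}{\psi_x(y;p')}\big]},\ \sqrt{\mathrm{Var}_x\big[\tfrac{\log p(y_0\mid x)}{\psi_x(y;p)}-\tfrac{\log p'(y_0\mid x)}{\psi_x(y;p')}\big]}\Big\}$, $t_2=\max_{x\in\mathcal X_{\mathrm{LLV}}\setminus\{x_0\}}\max\Big\{\sqrt{\mathrm{Var}_y\big[\tfrac{\log p(y\mid x)}{\psi_y(x;p)}-\tfrac{\log p'(y\mid x)}{\psi_y(x;p')}\big]},\ \sqrt{\mathrm{Var}_y\big[\tfrac{\log p(y\mid x_0)}{\psi_y(x;p)}-\tfrac{\log p'(y\mid x_0)}{\psi_y(x;p')}\big]}\Big\}$, $t_3=\max_{y\in\mathcal Y_{\mathrm{LLV}}\setminus\{y_0\}}|\psi_x(y;p)-\psi_x(y;p')|$,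 $t_4=\max_{x\in\mathcal X_{\mathrm{LLV}}\setminus\{x_0\}}|\psi_y(x;p)-\psi_y(x;p')|$, and $d^\lambda_{\mathrm{LLV}}(p,p')=\max\{t_1,t_2,\lambda t_3,\lambda t_4\}$. For $M$-dimensional random vectors $\mathbf z,\mathbf w$ (jointly distributed, components with finite positive variance), let $\mathbf z',\mathbf w'$ be the standardized vectors $z'_i=(z_i-\mathbb E[z_i])/\operatorname{std}(z_i)$, $w'_i=(w_i-\mathbb E[w_i])/\operatorname{std}(w_i)$, and let $\boldsymbol\Sigma_{\mathbf z'\mathbf w'}$ be the cross-covariance matrix with entries $\mathrm{Cov}[z'_i,w'_j]$. Let $\{\mathbf u_i\}_{i=1}^M$, $\{\mathbf v_i\}_{i=1}^M$ be the left and right singular vectors of $\boldsymbol\Sigma_{\mathbf z'\mathbf w'}$. Define $m_{\mathrm{SVD}}(\mathbf z,\mathbf w)=\frac1M\sum_{i=1}^M\mathrm{Cov}[\mathbf u_i^\top\mathbf z',\mathbf v_i^\top\mathbf w']$ (equivalently, $\frac1M$ times the sum of the singular values of $\boldsymbol\Sigma_{\mathbf z'\mathbf w'}$) and $d_{\mathrm{SVD}}(\mathbf z,\mathbf w)=1-m_{\mathrm{SVD}}(\mathbf z,\mathbf w)$. *)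

theory Defs
  imports "HOL-Probability.Probability"
begin

definition expect :: "'a measure \<Rightarrow> ('a \<Rightarrow> real) \<Rightarrow> real" where
  "expect P X = integral\<^sup>L P X"

definition var :: "'a measure \<Rightarrow> ('a \<Rightarrow> real) \<Rightarrow> real" where
  "var P X = expect P (\<lambda>w. (X w - expect P X)\<^sup>2)"

definition cov :: "'a measure \<Rightarrow> ('a \<Rightarrow> real) \<Rightarrow> ('a \<Rightarrow> real) \<Rightarrow> real" where
  "cov P X Y = expect P (\<lambda>w. (X w - expect P X) * (Y w - expect P Y))"

definition unif :: "'y::finite measure" where
  "unif = measure_pmf (pmf_of_set (UNIV :: 'y set))"

definition model_p :: "('x \<Rightarrow> real^'m) \<Rightarrow> ('y::finite \<Rightarrow> real^'m) \<Rightarrow> 'x \<Rightarrow> 'y \<Rightarrow> real" where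
  "model_p f g x y = exp (f x \<bullet> g y) / (\<Sum>y'\<in>UNIV. exp (f x \<bullet> g y'))"

definition psi_x :: "'x measure \<Rightarrow> 'y \<Rightarrow> ('x \<Rightarrow> 'y \<Rightarrow> real) \<Rightarrow> 'y \<Rightarrow> real" where
  "psi_x D y0 p y = sqrt (var D (\<lambda>x. ln (p x y) - ln (p x y0)))"

definition psi_y :: "'x \<Rightarrow> ('x \<Rightarrow> 'y::finite \<Rightarrow> real) \<Rightarrow> 'x \<Rightarrow> real" where
  "psi_y x0 p x = sqrt (var unif (\<lambda>y. ln (p x y) - ln (p x0 y)))"

definition admissible ::
  "'x measure \<Rightarrow> 'x \<Rightarrow> 'y::finite \<Rightarrow> 'x set \<Rightarrow> 'y set \<Rightarrow> ('x \<Rightarrow> 'y \<Rightarrow> real) \<Rightarrow> bool" where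
  "admissible D x0 y0 XL YL p \<longleftrightarrow>
     (\<forall>x y. p x y > 0) \<and> (\<forall>x. (\<Sum>y\<in>UNIV. p x y) = 1) \<and>
     (\<forall>y. (\<lambda>x. ln (p x y)) \<in> borel_measurable D \<and> integrable D (\<lambda>x. (ln (p x y))\<^sup>2)) \<and>
     (\<forall>x\<in>XL. measure D {x} > 0) \<and>
     (\<forall>x\<in>XL - {x0}. \<not> (\<exists>c. \<forall>y. ln (p x y) - ln (p x0 y) = c)) \<and>
     (\<forall>y\<in>YL - {y0}. var D (\<lambda>x. ln (p x y) - ln (p x y0)) > 0)"

definition d_LLV ::
  "'x measure \<Rightarrow> 'x \<Rightarrow> 'y::finite \<Rightarrow> 'x set \<Rightarrow> 'y set \<Rightarrow> real \<Rightarrow>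
   ('x \<Rightarrow> 'y \<Rightarrow> real) \<Rightarrow> ('x \<Rightarrow> 'y \<Rightarrow> real) \<Rightarrow> real" where
  "d_LLV D x0 y0 XL YL lam p p' =
    (let
       t1 = Max ((\<lambda>y. max
              (sqrt (var D (\<lambda>x. ln (p x y) / psi_x D y0 p y - ln (p' x y) / psi_x D y0 p' y)))
              (sqrt (var D (\<lambda>x. ln (p x y0) / psi_x D y0 p y - ln (p' x y0) / psi_x D y0 p' y))))
              ` (YL - {y0}));
       t2 = Max ((\<lambda>x. max
              (sqrt (var unif (\<lambda>y. ln (p x y) / psi_y x0 p x - ln (p' x y) / psi_y x0 p' x)))
              (sqrt (var unif (\<lambda>y. ln (p x0 y) / psi_y x0 p x - ln (p' x0 y) / psi_y x0 p' x))))
              ` (XL - {x0}));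
       t3 = Max ((\<lambda>y. \<bar>psi_x D y0 p y - psi_x D y0 p' y\<bar>) ` (YL - {y0}));
       t4 = Max ((\<lambda>x. \<bar>psi_y x0 p x - psi_y x0 p' x\<bar>) ` (XL - {x0}))
     in Max {t1, t2, lam * t3, lam * t4})"

definition standardize :: "'a measure \<Rightarrow> ('a \<Rightarrow> real^'m) \<Rightarrow> 'a \<Rightarrow> real^'m" where
  "standardize P z w = (\<chi> i. (z w $ i - expect P (\<lambda>v. z v $ i)) / sqrt (var P (\<lambda>v. z v $ i)))"

definition cross_cov :: "'a measure \<Rightarrow> ('a \<Rightarrow> real^'m) \<Rightarrow> ('a \<Rightarrow> real^'m) \<Rightarrow> real^'m^'m" where
  "cross_cov P z w = (\<chi> i j. cov P (\<lambda>v. z v $ i) (\<lambda>v. w v $ j))"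

text \<open>\<open>m_SVD\<close>: take an SVD \<open>\<Sigma> = U S V^T\<close> of the cross-covariance of the standardized
  vectors (U, V orthogonal, S diagonal nonnegative); columns of U, V are the left/right
  singular vectors; average \<open>Cov[u_i^T z', v_i^T w']\<close>.\<close>
definition m_SVD :: "'a measure \<Rightarrow> ('a \<Rightarrow> real^'m) \<Rightarrow> ('a \<Rightarrow> real^'m) \<Rightarrow> real" where
  "m_SVD P z w =
    (let zs = standardize P z; ws = standardize P w; \<Sigma> = cross_cov P zs ws in
     THE s. \<exists>U V :: real^'m^'m.
        orthogonal_matrix U \<and> orthogonal_matrix V \<and>
        (\<forall>i j. i \<noteq> j \<longrightarrow> (transpose U ** \<Sigma> ** V) $ i $ j = 0) \<and>
        (\<forall>i. (transpose U ** \<Sigma> ** V) $ i $ i \<ge> 0) \<and>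
        s = (1 / real CARD('m)) *
            (\<Sum>i\<in>UNIV. cov P (\<lambda>v. column i U \<bullet> zs v) (\<lambda>v. column i V \<bullet> ws v)))"

definition d_SVD :: "'a measure \<Rightarrow> ('a \<Rightarrow> real^'m) \<Rightarrow> ('a \<Rightarrow> real^'m) \<Rightarrow> real" where
  "d_SVD P z w = 1 - m_SVD P z w"

end

theory Submission
  imports Defs
begin


definition tr :: "real^'m^'m \<Rightarrow> real" where "tr A = (\<Sum>i\<in>UNIV. A $ i $ i)"

lemma orth_entry_le1:
  fixes A :: "real^'n^'n"
  assumes "orthogonal_matrix A" shows "\<bar>A $ i $ j\<bar> \<le> 1"
proof -
  have "norm (row i A) = 1" using assms orthogonal_matrix_orthonormal_rows by blast
  moreover have "\<bar>row i A $ j\<bar> \<le> norm (row i A)" by (rule component_le_norm_cart)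
  ultimately show ?thesis by (simp add: row_def)
qed

lemma orth_compact: "compact {U :: real^'n^'n. orthogonal_matrix U}"
proof (subst compact_eq_bounded_closed, intro conjI)
  show "bounded {U :: real^'n^'n. orthogonal_matrix U}"
    unfolding bounded_iff
  proof (intro exI ballI)
    fix U :: "real^'n^'n" assume "U \<in> {U. orthogonal_matrix U}"
    hence o: "orthogonal_matrix U" by simp
    show "norm U \<le> real CARD('n)"
    proof -
      have "norm U \<le> (\<Sum>i\<in>UNIV. norm (U $ i))" unfolding norm_vec_def by (rule L2_set_le_sum) simp
      also have "\<dots> = (\<Sum>i\<in>UNIV. norm (row i U))" by (simp add: row_def vec_lambda_eta)
      also have "\<dots> = (\<Sum>i\<in>(UNIV::'n set). 1)" using o unfolding orthogonal_matrix_orthonormal_rows by simp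
      finally show ?thesis by simp
    qed
  qed
next
  have "{U :: real^'n^'n. orthogonal_matrix U} = (\<Inter>i. \<Inter>j. {U. (\<Sum>k\<in>UNIV. U $ k $ i * U $ k $ j) = (if i = j then 1 else 0)})"
    by (auto simp: orthogonal_matrix matrix_matrix_mult_def transpose_def mat_def vec_eq_iff)
  also have "closed \<dots>"
    by (intro closed_INT ballI closed_Collect_eq continuous_intros continuous_on_const)
  finally show "closed {U :: real^'n^'n. orthogonal_matrix U}" .
qed

lemma sum_split2:
  fixes f :: "'n::finite \<Rightarrow> real"
  assumes "i \<noteq> j"
  shows "(\<Sum>r\<in>UNIV. f r) = f i + f j + (\<Sum>r\<in>UNIV-{i,j}. f r)"
proof -
  have "(\<Sum>r\<in>UNIV. f r) = f i + (\<Sum>r\<in>UNIV-{i}. f r)"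
    by (simp add: sum.remove)
  also have "(\<Sum>r\<in>UNIV-{i}. f r) = f j + (\<Sum>r\<in>UNIV-{i}-{j}. f r)"
    using assms by (subst sum.remove[of _ j]) auto
  also have "UNIV-{i}-{j} = UNIV - {i,j}" by auto
  finally show ?thesis by simp
qed

definition giv :: "'n \<Rightarrow> 'n \<Rightarrow> real \<Rightarrow> real \<Rightarrow> real^'n^'n" where
  "giv i j c s = (\<chi> k l. if k = i \<and> l = i then c else if k = i \<and> l = j then -s
      else if k = j \<and> l = i then s else if k = j \<and> l = j then c else if k = l then 1 else 0)"

lemma sum_delta2:
  fixes k l :: "'n::finite"
  shows "(\<Sum>r\<in>UNIV-{i,j}. (if r = k then 1 else 0) * (if r = l then 1 else (0::real)))
     = (if k = l \<and> k \<noteq> i \<and> k \<noteq> j then 1 else 0)"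
proof -
  have "(\<Sum>r\<in>UNIV-{i,j}. (if r = k then 1 else 0) * (if r = l then 1 else (0::real)))
     = (\<Sum>r\<in>UNIV-{i,j}. if r = k then (if k = l then 1 else 0) else 0)"
    by (rule sum.cong) auto
  also have "\<dots> = (if k = l \<and> k \<noteq> i \<and> k \<noteq> j then 1 else 0)"
    by (subst sum.delta) auto
  finally show ?thesis .
qed

lemma giv_orth:
  fixes i j :: "'n::finite"
  assumes ij: "i \<noteq> j" and cs: "c^2 + s^2 = 1"
  shows "orthogonal_matrix (giv i j c s)"
  unfolding orthogonal_matrix
proof (simp add: vec_eq_iff, intro allI)
  fix k l
  let ?G = "giv i j c s"
  have e: "\<And>r m. r \<noteq> i \<Longrightarrow> r \<noteq> j \<Longrightarrow> ?G $ r $ m = (if r = m then 1 else 0)"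
    by (auto simp: giv_def)
  have "(transpose ?G ** ?G) $ k $ l = (\<Sum>r\<in>UNIV. ?G $ r $ k * ?G $ r $ l)"
    by (simp add: matrix_matrix_mult_def transpose_def)
  also have "\<dots> = ?G $ i $ k * ?G $ i $ l + ?G $ j $ k * ?G $ j $ l + 
     (\<Sum>r\<in>UNIV-{i,j}. (if r = k then 1 else 0) * (if r = l then 1 else (0::real)))"
    using e ij by (subst sum_split2[OF ij]) (auto intro!: sum.cong)
  also have "\<dots> = mat 1 $ k $ l"
    unfolding sum_delta2 using ij cs
    by (auto simp: giv_def mat_def power2_eq_square algebra_simps)
  finally show "(transpose ?G ** ?G) $ k $ l = mat 1 $ k $ l" .
qed

lemma giv_left:
  fixes i j :: "'n::finite"
  assumes ij: "i \<noteq> j"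
  shows "(giv i j c s ** B) $ k $ m = (if k = i then c * B$i$m - s * B$j$m
     else if k = j then s * B$i$m + c * B$j$m else B$k$m)"
proof -
  let ?G = "giv i j c s"
  have "(?G ** B) $ k $ m = (\<Sum>r\<in>UNIV. ?G $ k $ r * B $ r $ m)"
    by (simp add: matrix_matrix_mult_def)
  also have "\<dots> = ?G $ k $ i * B $ i $ m + ?G $ k $ j * B $ j $ m +
      (\<Sum>r\<in>UNIV-{i,j}. ?G $ k $ r * B $ r $ m)"
    by (rule sum_split2[OF ij])
  also have "(\<Sum>r\<in>UNIV-{i,j}. ?G $ k $ r * B $ r $ m) = 
      (\<Sum>r\<in>UNIV-{i,j}. if r = k then B $ k $ m else 0)"
    using ij by (intro sum.cong) (auto simp: giv_def)
  also have "\<dots> = (if k \<noteq> i \<and> k \<noteq> j then B $ k $ m else 0)"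
    by (subst sum.delta) auto
  finally show ?thesis using ij by (auto simp: giv_def)
qed

lemma giv_right:
  fixes i j :: "'n::finite"
  assumes ij: "i \<noteq> j"
  shows "(B ** giv i j c s) $ m $ k = (if k = i then B$m$i * c + B$m$j * s
     else if k = j then - B$m$i * s + B$m$j * c else B$m$k)"
proof -
  let ?G = "giv i j c s"
  have "(B ** ?G) $ m $ k = (\<Sum>r\<in>UNIV. B $ m $ r * ?G $ r $ k)"
    by (simp add: matrix_matrix_mult_def)
  also have "\<dots> = B $ m $ i * ?G $ i $ k + B $ m $ j * ?G $ j $ k +
      (\<Sum>r\<in>UNIV-{i,j}. B $ m $ r * ?G $ r $ k)"
    by (rule sum_split2[OF ij])
  also have "(\<Sum>r\<in>UNIV-{i,j}. B $ m $ r * ?G $ r $ k) = 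
      (\<Sum>r\<in>UNIV-{i,j}. if r = k then B $ m $ k else 0)"
    using ij by (intro sum.cong) (auto simp: giv_def)
  also have "\<dots> = (if k \<noteq> i \<and> k \<noteq> j then B $ m $ k else 0)"
    by (subst sum.delta) auto
  finally show ?thesis using ij by (auto simp: giv_def)
qed

definition reflm :: "'n \<Rightarrow> real^'n^'n" where
  "reflm i = (\<chi> k l. if k = l then (if k = i then -1 else 1) else 0)"

lemma reflm_orth: "orthogonal_matrix (reflm i :: real^'n::finite^'n)"
  unfolding orthogonal_matrix
proof (simp add: vec_eq_iff, intro allI)
  fix k l :: 'n
  have t: "\<And>r. reflm i $ r $ k * reflm i $ r $ l = (if r = k then (if k = l then 1 else 0) else (0::real))"
    by (auto simp: reflm_def)
  have "(transpose (reflm i) ** reflm i) $ k $ l =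
    (\<Sum>r\<in>UNIV. if r = k then (if k = l then 1 else 0) else (0::real))"
    by (simp add: matrix_matrix_mult_def transpose_def t)
  also have "\<dots> = mat 1 $ k $ l" by (subst sum.delta) (auto simp: mat_def)
  finally show "(transpose (reflm i) ** reflm i) $ k $ l = mat 1 $ k $ l" .
qed

lemma reflm_left: "(reflm i ** B) $ k $ m = (if k = i then - B $ k $ m else (B :: real^'n::finite^'n) $ k $ m)"
proof -
  have t: "\<And>r. reflm i $ k $ r * B $ r $ m = (if r = k then (if k = i then - B $ k $ m else B $ k $ m) else 0)"
    by (auto simp: reflm_def)
  have "(reflm i ** B) $ k $ m = (\<Sum>r\<in>UNIV. if r = k then (if k = i then - B $ k $ m else B $ k $ m) else 0)"
    by (simp add: matrix_matrix_mult_def t)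
  also have "\<dots> = (if k = i then - B $ k $ m else B $ k $ m)" by (subst sum.delta) auto
  finally show ?thesis .
qed

lemma quad_zero:
  fixes a b :: real
  assumes "\<And>t. b * t \<le> a * t^2"
  shows "b = 0"
proof (rule ccontr)
  assume b: "b \<noteq> 0"
  define t where "t = b / (\<bar>a\<bar> + 1)"
  have pos: "\<bar>a\<bar> + 1 > 0" by simp
  have "b * t = b^2 / (\<bar>a\<bar> + 1)" by (simp add: t_def power2_eq_square)
  moreover have "a * t^2 = a * b^2 / (\<bar>a\<bar> + 1)^2" by (simp add: t_def power_divide)
  moreover have "a * b^2 / (\<bar>a\<bar> + 1)^2 < b^2 / (\<bar>a\<bar> + 1)"
  proof -
    have b2: "b^2 > 0" using b by simp
    have "a * b^2 \<le> \<bar>a\<bar> * b^2" using b2 by (intro mult_right_mono) auto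
    also have "\<dots> < (\<bar>a\<bar> + 1) * b^2" using b2 by simp
    finally have lt: "a * b^2 < (\<bar>a\<bar> + 1) * b^2" .
    have "a * b^2 / (\<bar>a\<bar> + 1)^2 = (a * b^2 / (\<bar>a\<bar> + 1)) / (\<bar>a\<bar> + 1)"
      by (simp add: power2_eq_square)
    also have "\<dots> < ((\<bar>a\<bar> + 1) * b^2 / (\<bar>a\<bar> + 1)) / (\<bar>a\<bar> + 1)"
      using lt pos by (intro divide_strict_right_mono) auto
    also have "\<dots> = b^2 / (\<bar>a\<bar> + 1)" using pos by simp
    finally show ?thesis .
  qed
  ultimately show False using assms[of t] by linarith
qed

lemma wsum_diff2:
  fixes X Y w :: "'n::finite \<Rightarrow> real"
  assumes ij: "i \<noteq> j" and e: "\<And>k. k \<noteq> i \<Longrightarrow> k \<noteq> j \<Longrightarrow> X k = Y k"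
  shows "(\<Sum>k\<in>UNIV. w k * X k) = (\<Sum>k\<in>UNIV. w k * Y k) + w i * (X i - Y i) + w j * (X j - Y j)"
proof -
  have r: "(\<Sum>k\<in>UNIV-{i,j}. w k * X k) = (\<Sum>k\<in>UNIV-{i,j}. w k * Y k)"
    using e by (intro sum.cong) auto
  show ?thesis
    by (subst (1 2) sum_split2[OF ij]) (simp only: r, simp add: algebra_simps)
qed

lemma wsum_diff1:
  fixes X Y w :: "'n::finite \<Rightarrow> real"
  assumes e: "\<And>k. k \<noteq> i \<Longrightarrow> X k = Y k"
  shows "(\<Sum>k\<in>UNIV. w k * X k) = (\<Sum>k\<in>UNIV. w k * Y k) + w i * (X i - Y i)"
proof -
  have r: "(\<Sum>k\<in>UNIV-{i}. w k * X k) = (\<Sum>k\<in>UNIV-{i}. w k * Y k)"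
    using e by (intro sum.cong) auto
  show ?thesis
    by (subst (1 2) sum.remove[of UNIV i]) (simp_all only: r finite UNIV_I, simp add: algebra_simps)
qed

lemma svd_exists:
  fixes A :: "real^'n::finite^'n"
  shows "\<exists>U V. orthogonal_matrix U \<and> orthogonal_matrix V \<and>
     (\<forall>i j. i \<noteq> j \<longrightarrow> (transpose U ** A ** V) $ i $ j = 0) \<and>
     (\<forall>i. (transpose U ** A ** V) $ i $ i \<ge> 0)"
proof -
  obtain h :: "'n \<Rightarrow> nat" where h: "inj h"
    using finite_imp_inj_to_nat_seg[of "UNIV::'n set"] by auto
  define w where "w k = real (h k) + 1" for k
  have wpos: "w k > 0" for k unfolding w_def by simp
  have winj: "w i \<noteq> w j" if "i \<noteq> j" for i j
    using h that unfolding w_def inj_def by auto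
  define F where "F B = (\<Sum>k\<in>UNIV. w k * B $ k $ k)" for B :: "real^'n^'n"
  define S where "S = {U :: real^'n^'n. orthogonal_matrix U} \<times> {U :: real^'n^'n. orthogonal_matrix U}"
  have cS: "compact S" unfolding S_def by (intro compact_Times orth_compact)
  have neS: "S \<noteq> {}" using orthogonal_matrix_id unfolding S_def by blast
  have cont: "continuous_on S (\<lambda>x. F (fst x ** A ** snd x))"
    unfolding F_def matrix_matrix_mult_def by (auto intro!: continuous_intros)
  obtain x where "x \<in> S" and xmax: "\<And>y. y \<in> S \<Longrightarrow> F (fst y ** A ** snd y) \<le> F (fst x ** A ** snd x)"
    using continuous_attains_sup[OF cS neS cont] by blast
  then obtain P Q where x: "x = (P, Q)" and P: "orthogonal_matrix P" and Q: "orthogonal_matrix Q"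
    unfolding S_def by auto
  define B where "B = P ** A ** Q"
  have left: "F (R ** B) \<le> F B" if R: "orthogonal_matrix R" for R
  proof -
    have "(R ** P, Q) \<in> S" unfolding S_def using R P Q orthogonal_matrix_mul by blast
    from xmax[OF this] show ?thesis unfolding x B_def by (simp add: matrix_mul_assoc)
  qed
  have right: "F (B ** R) \<le> F B" if R: "orthogonal_matrix R" for R
  proof -
    have "(P, Q ** R) \<in> S" unfolding S_def using R P Q orthogonal_matrix_mul by blast
    from xmax[OF this] show ?thesis unfolding x B_def by (simp add: matrix_mul_assoc)
  qed
  have rot: "eA * t \<le> eB * t^2"
    if H: "\<And>c s. c^2 + s^2 = 1 \<Longrightarrow> aA * ((c-1) * bA + s * bB) + aB * ((c-1) * bC + s * bD) \<le> 0"
      and eA: "eA = aA * bB + aB * bD" and eB: "eB = aA * bA + aB * bC"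
    for t aA aB bA bB bC bD eA eB :: real
  proof -
    define c where "c = (1 - t^2)/(1+t^2)"
    define s where "s = 2*t/(1+t^2)"
    have d: "1 + t^2 > 0" by (simp add: add_pos_nonneg)
    have cs: "c^2 + s^2 = 1"
    proof -
      have "c^2 + s^2 = ((1-t^2)^2 + (2*t)^2)/(1+t^2)^2"
        by (simp add: c_def s_def power_divide add_divide_distrib)
      also have "(1-t^2)^2 + (2*t)^2 = (1+t^2)^2" by (simp add: power2_eq_square algebra_simps)
      finally show ?thesis using d by simp
    qed
    have "aA * ((c-1) * bA + s * bB) + aB * ((c-1) * bC + s * bD)
       = (2/(1+t^2)) * (eA * t - eB * t^2)"
    proof -
      define q where "q = 1/(1+t^2)"
      have c1: "c - 1 = -2 * t^2 * q" unfolding c_def q_def using d by (simp add: field_simps)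
      have s1: "s = 2 * t * q" unfolding s_def q_def by simp
      have "aA * ((c-1) * bA + s * bB) + aB * ((c-1) * bC + s * bD) = (2*q) * (eA * t - eB * t^2)"
        unfolding c1 s1 eA eB by (simp add: algebra_simps)
      thus ?thesis unfolding q_def by simp
    qed
    with H[OF cs] have "(2/(1+t^2)) * (eA * t - eB * t^2) \<le> 0" by simp
    moreover have "2/(1+t^2) > 0" using d by simp
    ultimately have "eA * t - eB * t^2 \<le> 0"
      by (metis mult_le_0_iff not_less)
    thus ?thesis by simp
  qed
  have offd: "B $ i $ j = 0" if ij: "i \<noteq> j" for i j
  proof -
    have L: "(w j * B$i$j - w i * B$j$i) * t \<le> (w i * B$i$i + w j * B$j$j) * t^2" for t
    proof (rule rot[where aA = "w i" and aB = "w j"])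
      fix c s :: real assume cs: "c^2 + s^2 = 1"
      have "F (giv i j c s ** B) \<le> F B" by (rule left[OF giv_orth[OF ij cs]])
      moreover have "F (giv i j c s ** B) = F B + w i * ((giv i j c s ** B)$i$i - B$i$i) + w j*((giv i j c s ** B)$j$j - B$j$j)"
        unfolding F_def by (rule wsum_diff2[OF ij, where X = "\<lambda>k. (giv i j c s ** B)$k$k" and Y = "\<lambda>k. B$k$k"]) (use ij in \<open>simp add: giv_left\<close>)
      ultimately show "w i * ((c-1) * B$i$i + s * (- B$j$i)) + w j * ((c-1) * B$j$j + s * B$i$j) \<le> 0"
        using ij by (simp add: giv_left giv_right algebra_simps)
    qed (simp_all add: algebra_simps)
    have R: "(w i * B$i$j - w j * B$j$i) * t \<le> (w i * B$i$i + w j * B$j$j) * t^2" for t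
    proof (rule rot[where aA = "w i" and aB = "w j"])
      fix c s :: real assume cs: "c^2 + s^2 = 1"
      have "F (B ** giv i j c s) \<le> F B" by (rule right[OF giv_orth[OF ij cs]])
      moreover have "F (B ** giv i j c s) = F B + w i * ((B ** giv i j c s)$i$i - B$i$i) + w j*((B ** giv i j c s)$j$j - B$j$j)"
        unfolding F_def by (rule wsum_diff2[OF ij, where X = "\<lambda>k. (B ** giv i j c s)$k$k" and Y = "\<lambda>k. B$k$k"]) (use ij in \<open>simp add: giv_right\<close>)
      ultimately show "w i * ((c-1) * B$i$i + s * B$i$j) + w j * ((c-1) * B$j$j + s * (- B$j$i)) \<le> 0"
        using ij by (simp add: giv_left giv_right algebra_simps)
    qed (simp_all add: algebra_simps)
    have e1: "w j * B$i$j = w i * B$j$i" using quad_zero[OF L] by simp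
    have e2: "w i * B$i$j = w j * B$j$i" using quad_zero[OF R] by simp
    have "w j * (w j * B$i$j) = w i * (w i * B$i$j)"
      using e1 e2 by (metis mult.left_commute)
    hence "(w j * w j - w i * w i) * B$i$j = 0" by (simp add: algebra_simps)
    moreover have "w j * w j \<noteq> w i * w i"
    proof
      assume "w j * w j = w i * w i"
      hence "w j = w i" using wpos[of i] wpos[of j]
        by (metis abs_of_pos power2_eq_square real_sqrt_abs)
      with winj[OF ij] show False by simp
    qed
    ultimately show ?thesis by simp
  qed
  have diag: "B $ i $ i \<ge> 0" for i
  proof -
    have "F (reflm i ** B) \<le> F B" by (rule left[OF reflm_orth])
    moreover have "F (reflm i ** B) = F B + w i * ((reflm i ** B)$i$i - B$i$i)"
      unfolding F_def by (rule wsum_diff1[where X = "\<lambda>k. (reflm i ** B)$k$k" and Y = "\<lambda>k. B$k$k"]) (simp add: reflm_left)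
    ultimately have "w i * B$i$i \<ge> 0" by (simp add: reflm_left)
    thus ?thesis using wpos[of i] by (simp add: zero_le_mult_iff)
  qed
  show ?thesis
    by (rule exI[of _ "transpose P"], rule exI[of _ Q])
       (use P Q offd diag in \<open>simp add: B_def\<close>)
qed


lemma diag_mult3:
  fixes X D Y :: "real^'n::finite^'n"
  assumes d: "\<forall>i j. i \<noteq> j \<longrightarrow> D $ i $ j = 0"
  shows "(X ** D ** Y) $ k $ m = (\<Sum>a\<in>UNIV. X $ k $ a * D $ a $ a * Y $ a $ m)"
proof -
  have xd: "(X ** D) $ k $ b = X $ k $ b * D $ b $ b" for b
  proof -
    have "(X ** D) $ k $ b = (\<Sum>a\<in>UNIV. X $ k $ a * D $ a $ b)"
      by (simp add: matrix_matrix_mult_def)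
    also have "\<dots> = (\<Sum>a\<in>UNIV. if a = b then X $ k $ b * D $ b $ b else 0)"
      by (rule sum.cong) (use d in auto)
    also have "\<dots> = X $ k $ b * D $ b $ b" by simp
    finally show ?thesis .
  qed
  show ?thesis by (simp add: matrix_matrix_mult_def[of "X ** D"] xd)
qed

lemma svd_trace_max:
  fixes A U V P Q :: "real^'n::finite^'n"
  assumes U: "orthogonal_matrix U" and V: "orthogonal_matrix V"
    and P: "orthogonal_matrix P" and Q: "orthogonal_matrix Q"
    and d: "\<forall>i j. i \<noteq> j \<longrightarrow> (transpose U ** A ** V) $ i $ j = 0"
    and nn: "\<forall>i. (transpose U ** A ** V) $ i $ i \<ge> 0"
  shows "tr (P ** A ** Q) \<le> tr (transpose U ** A ** V)"
proof -
  define D where "D = transpose U ** A ** V"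
  have "U ** D ** transpose V = (U ** transpose U) ** A ** (V ** transpose V)"
    unfolding D_def by (simp add: matrix_mul_assoc)
  also have "\<dots> = A" using U V by (simp add: orthogonal_matrix_def)
  finally have AD: "A = U ** D ** transpose V" by simp
  define X where "X = P ** U"
  define Y where "Y = transpose V ** Q"
  have XY: "P ** A ** Q = X ** D ** Y" unfolding AD X_def Y_def by (simp add: matrix_mul_assoc)
  have oYX: "orthogonal_matrix (Y ** X)" unfolding X_def Y_def
    using U V P Q by (intro orthogonal_matrix_mul) auto
  have d': "\<forall>i j. i \<noteq> j \<longrightarrow> D $ i $ j = 0" using d D_def by simp
  have "tr (P ** A ** Q) = (\<Sum>k\<in>UNIV. \<Sum>a\<in>UNIV. X $ k $ a * D $ a $ a * Y $ a $ k)"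
    unfolding tr_def XY diag_mult3[OF d'] ..
  also have "\<dots> = (\<Sum>a\<in>UNIV. D $ a $ a * (\<Sum>k\<in>UNIV. Y $ a $ k * X $ k $ a))"
    by (subst sum.swap) (simp add: sum_distrib_left algebra_simps)
  also have "\<dots> = (\<Sum>a\<in>UNIV. D $ a $ a * (Y ** X) $ a $ a)"
    by (simp add: matrix_matrix_mult_def)
  also have "\<dots> \<le> (\<Sum>a\<in>UNIV. D $ a $ a * 1)"
  proof (rule sum_mono)
    fix a
    have "(Y ** X) $ a $ a \<le> 1" using orth_entry_le1[OF oYX, of a a] by simp
    thus "D $ a $ a * (Y ** X) $ a $ a \<le> D $ a $ a * 1"
      using nn D_def by (intro mult_left_mono) auto
  qed
  also have "\<dots> = tr D" by (simp add: tr_def)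
  finally show ?thesis unfolding D_def .
qed



definition sqi :: "'a measure \<Rightarrow> ('a \<Rightarrow> real) \<Rightarrow> bool" where
  "sqi P X \<longleftrightarrow> X \<in> borel_measurable P \<and> integrable P (\<lambda>v. (X v)^2)"

lemma abs_mult_le_sq: "\<bar>x * y\<bar> \<le> x^2 + (y::real)^2"
proof -
  have "0 \<le> (\<bar>x\<bar> - \<bar>y\<bar>)^2" by simp
  hence "2 * (\<bar>x\<bar> * \<bar>y\<bar>) \<le> x^2 + y^2" by (simp add: power2_eq_square algebra_simps)
  moreover have "\<bar>x\<bar> * \<bar>y\<bar> \<ge> 0" by simp
  ultimately show ?thesis unfolding abs_mult by linarith
qed

lemma sqi_mult: "sqi P X \<Longrightarrow> sqi P Y \<Longrightarrow> integrable P (\<lambda>v. X v * Y v)"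
  unfolding sqi_def
  by (rule Bochner_Integration.integrable_bound[of P "\<lambda>v. (X v)^2 + (Y v)^2"])
     (auto intro!: AE_I2 simp: abs_mult_le_sq)

lemma sqi_add: "sqi P X \<Longrightarrow> sqi P Y \<Longrightarrow> sqi P (\<lambda>v. X v + Y v)"
proof -
  assume x: "sqi P X" and y: "sqi P Y"
  have [measurable]: "X \<in> borel_measurable P" "Y \<in> borel_measurable P" using x y unfolding sqi_def by auto
  have "integrable P (\<lambda>v. (X v)^2 + 2 * (X v * Y v) + (Y v)^2)"
    using x y sqi_mult[OF x y] unfolding sqi_def by auto
  moreover have "(\<lambda>v. (X v)^2 + 2 * (X v * Y v) + (Y v)^2) = (\<lambda>v. (X v + Y v)^2)"
    by (simp add: power2_sum algebra_simps)
  ultimately have "integrable P (\<lambda>v. (X v + Y v)^2)" by simp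
  moreover have "(\<lambda>v. X v + Y v) \<in> borel_measurable P" by measurable
  ultimately show ?thesis unfolding sqi_def by simp
qed

lemma sqi_cmult: "sqi P X \<Longrightarrow> sqi P (\<lambda>v. c * X v)"
proof -
  assume x: "sqi P X"
  have [measurable]: "X \<in> borel_measurable P" using x unfolding sqi_def by auto
  have "(\<lambda>v. c * X v) \<in> borel_measurable P" by measurable
  thus ?thesis using x unfolding sqi_def by (simp add: power_mult_distrib)
qed

lemma sqi_zero: "sqi P (\<lambda>v. 0)"
  unfolding sqi_def by simp

lemma sqi_sum: "finite I \<Longrightarrow> (\<And>i. i \<in> I \<Longrightarrow> sqi P (X i)) \<Longrightarrow> sqi P (\<lambda>v. \<Sum>i\<in>I. X i v)"
  by (induction I rule: finite_induct) (auto intro: sqi_add simp: sqi_zero)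

lemma var_cov: "var P X = cov P X X"
  unfolding var_def cov_def by (simp add: power2_eq_square)

lemma cov_comm: "cov P X Y = cov P Y X"
  unfolding cov_def by (simp add: mult.commute)

lemma var_nonneg: "var P X \<ge> 0"
  unfolding var_def expect_def by (rule integral_nonneg_AE) auto

lemma cov_scale_left: "cov P (\<lambda>v. a * X v) Z = a * cov P X Z"
  unfolding cov_def expect_def by (simp add: right_diff_distrib[symmetric] mult.assoc)

context prob_space
begin

lemma sqi_const: "sqi M (\<lambda>v. c)"
  unfolding sqi_def by simp

lemma sqi_integrable: "sqi M X \<Longrightarrow> integrable M X"
proof -
  assume "sqi M X"
  hence m: "X \<in> borel_measurable M" and i: "integrable M (\<lambda>v. (X v)^2)" by (auto simp: sqi_def)
  show ?thesis by (rule square_integrable_imp_integrable[OF m i])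
qed

lemma expect_shift: "integrable M X \<Longrightarrow> expect M (\<lambda>v. X v + c) = expect M X + c"
  unfolding expect_def by (simp add: prob_space)

lemma cov_shift_left: "integrable M X \<Longrightarrow> cov M (\<lambda>v. X v + c) Z = cov M X Z"
  unfolding cov_def by (simp add: expect_shift)

lemma expect_add: "integrable M X \<Longrightarrow> integrable M Y \<Longrightarrow> expect M (\<lambda>v. X v + Y v) = expect M X + expect M Y"
  unfolding expect_def by simp

lemma sqi_diff_const: "sqi M X \<Longrightarrow> sqi M (\<lambda>v. X v - c)"
proof -
  assume "sqi M X"
  hence "sqi M (\<lambda>v. X v + (- c))" by (rule sqi_add[OF _ sqi_const])
  thus ?thesis by simp
qed

lemma cov_add_left:
  assumes x: "sqi M X" and y: "sqi M Y" and z: "sqi M Z"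
  shows "cov M (\<lambda>v. X v + Y v) Z = cov M X Z + cov M Y Z"
proof -
  have ix: "integrable M X" "integrable M Y" using x y sqi_integrable by auto
  have sx: "sqi M (\<lambda>v. X v - expect M X)" by (rule sqi_diff_const[OF x])
  have sy: "sqi M (\<lambda>v. Y v - expect M Y)" by (rule sqi_diff_const[OF y])
  have sz: "sqi M (\<lambda>v. Z v - expect M Z)" by (rule sqi_diff_const[OF z])
  have i1: "integrable M (\<lambda>v. (X v - expect M X) * (Z v - expect M Z))"
    by (rule sqi_mult[OF sx sz])
  have i2: "integrable M (\<lambda>v. (Y v - expect M Y) * (Z v - expect M Z))"
    by (rule sqi_mult[OF sy sz])
  have e: "expect M (\<lambda>v. X v + Y v) = expect M X + expect M Y"
    by (rule expect_add[OF ix])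
  have f: "(\<lambda>v. (X v + Y v - expect M (\<lambda>v. X v + Y v)) * (Z v - expect M Z)) =
        (\<lambda>v. (X v - expect M X) * (Z v - expect M Z) + (Y v - expect M Y) * (Z v - expect M Z))"
    unfolding e by (simp add: algebra_simps)
  have "cov M (\<lambda>v. X v + Y v) Z = expect M (\<lambda>v. (X v + Y v - expect M (\<lambda>v. X v + Y v)) * (Z v - expect M Z))"
    by (simp only: cov_def)
  also have "\<dots> = expect M (\<lambda>v. (X v - expect M X) * (Z v - expect M Z) + (Y v - expect M Y) * (Z v - expect M Z))"
    by (simp only: f)
  also have "\<dots> = cov M X Z + cov M Y Z"
    unfolding expect_add[OF i1 i2] by (simp only: cov_def)
  finally show ?thesis .
qed

lemma cov_sum_left:
  assumes "finite I" "\<And>i. i \<in> I \<Longrightarrow> sqi M (X i)" "sqi M Z"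
  shows "cov M (\<lambda>v. \<Sum>i\<in>I. c i * X i v) Z = (\<Sum>i\<in>I. c i * cov M (X i) Z)"
  using assms
proof (induction I rule: finite_induct)
  case empty
  then show ?case unfolding cov_def expect_def by simp
next
  case (insert a I)
  have s1: "sqi M (\<lambda>v. c a * X a v)" using insert(4) by (intro sqi_cmult) simp
  have s2: "sqi M (\<lambda>v. \<Sum>i\<in>I. c i * X i v)"
    by (rule sqi_sum[OF insert(1)]) (rule sqi_cmult, use insert(4) in simp)
  have "cov M (\<lambda>v. \<Sum>i\<in>insert a I. c i * X i v) Z = cov M (\<lambda>v. c a * X a v + (\<Sum>i\<in>I. c i * X i v)) Z"
    using insert by simp
  also have "\<dots> = cov M (\<lambda>v. c a * X a v) Z + cov M (\<lambda>v. \<Sum>i\<in>I. c i * X i v) Z"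
    by (rule cov_add_left[OF s1 s2 insert(5)])
  also have "\<dots> = c a * cov M (X a) Z + (\<Sum>i\<in>I. c i * cov M (X i) Z)"
    using insert by (simp add: cov_scale_left)
  finally show ?case using insert by simp
qed

lemma sqi_diff: "sqi M X \<Longrightarrow> sqi M Y \<Longrightarrow> sqi M (\<lambda>v. X v - Y v)"
proof -
  assume x: "sqi M X" and y: "sqi M Y"
  have "sqi M (\<lambda>v. X v + (-1) * Y v)" by (rule sqi_add[OF x sqi_cmult[OF y]])
  thus ?thesis by simp
qed

lemma sqi_affine: "sqi M X \<Longrightarrow> (\<And>v. H v = a * X v + c) \<Longrightarrow> sqi M H"
proof -
  assume x: "sqi M X" and h: "\<And>v. H v = a * X v + c"
  have "sqi M (\<lambda>v. a * X v + c)" by (rule sqi_add[OF sqi_cmult[OF x] sqi_const])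
  moreover have "H = (\<lambda>v. a * X v + c)" using h by auto
  ultimately show ?thesis by simp
qed

lemma cov_affine_left:
  assumes x: "integrable M X" and h: "\<And>v. H v = a * X v + c"
  shows "cov M H Z = a * cov M X Z"
proof -
  have "H = (\<lambda>v. a * X v + c)" using h by auto
  hence "cov M H Z = cov M (\<lambda>v. a * X v) Z"
    using cov_shift_left[of "\<lambda>v. a * X v" c Z] x by simp
  also have "\<dots> = a * cov M X Z" by (rule cov_scale_left)
  finally show ?thesis .
qed

lemma cov_lin2_left:
  assumes f: "sqi M F" and g: "sqi M G" and z: "sqi M Z" and h: "\<And>v. H v = a * F v + b * G v"
  shows "cov M H Z = a * cov M F Z + b * cov M G Z"
proof -
  have "H = (\<lambda>v. a * F v + b * G v)" using h by auto
  hence "cov M H Z = cov M (\<lambda>v. a * F v) Z + cov M (\<lambda>v. b * G v) Z"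
    using cov_add_left[OF sqi_cmult[OF f] sqi_cmult[OF g] z] by simp
  thus ?thesis by (simp add: cov_scale_left)
qed

lemma var_lin:
  assumes f: "sqi M F" and g: "sqi M G" and h: "\<And>v. H v = a * F v + b * G v"
  shows "var M H = a^2 * var M F + b^2 * var M G + 2 * a * b * cov M F G"
proof -
  have sh: "sqi M H"
  proof -
    have "sqi M (\<lambda>v. a * F v + b * G v)" by (rule sqi_add[OF sqi_cmult[OF f] sqi_cmult[OF g]])
    moreover have "H = (\<lambda>v. a * F v + b * G v)" using h by auto
    ultimately show ?thesis by simp
  qed
  have "var M H = a * cov M F H + b * cov M G H"
    unfolding var_cov by (rule cov_lin2_left[OF f g sh h])
  also have "cov M F H = a * cov M F F + b * cov M F G"
    using cov_lin2_left[OF f g f h] cov_comm[of M F H] cov_comm[of M G F] by simp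
  also have "cov M G H = a * cov M F G + b * cov M G G"
    using cov_lin2_left[OF f g g h] cov_comm[of M G H] by simp
  finally show ?thesis unfolding var_cov by (simp add: power2_eq_square algebra_simps)
qed

lemma key_cov:
  assumes x1: "sqi M X1" and x2: "sqi M X2" and y1: "sqi M Y1" and y2: "sqi M Y2"
    and h1: "\<And>v. h1 v = X1 v - X2 v + c1" and h2: "\<And>v. h2 v = Y1 v - Y2 v + c2"
    and p1: "var M (\<lambda>v. X1 v - X2 v) > 0" and p2: "var M (\<lambda>v. Y1 v - Y2 v) > 0"
    and a: "sqrt (var M (\<lambda>v. X1 v / sqrt (var M (\<lambda>v. X1 v - X2 v)) - Y1 v / sqrt (var M (\<lambda>v. Y1 v - Y2 v)))) \<le> \<epsilon>"
    and b: "sqrt (var M (\<lambda>v. X2 v / sqrt (var M (\<lambda>v. X1 v - X2 v)) - Y2 v / sqrt (var M (\<lambda>v. Y1 v - Y2 v)))) \<le> \<epsilon>"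
  shows "cov M (\<lambda>v. (h1 v - expect M h1) / sqrt (var M h1)) (\<lambda>v. (h2 v - expect M h2) / sqrt (var M h2)) \<ge> 1 - 2 * \<epsilon>^2"
proof -
  define d1 where "d1 = (\<lambda>v. X1 v - X2 v)"
  define d2 where "d2 = (\<lambda>v. Y1 v - Y2 v)"
  define s1 where "s1 = sqrt (var M d1)"
  define s2 where "s2 = sqrt (var M d2)"
  have sd1: "sqi M d1" unfolding d1_def by (rule sqi_diff[OF x1 x2])
  have sd2: "sqi M d2" unfolding d2_def by (rule sqi_diff[OF y1 y2])
  have id1: "integrable M d1" "integrable M d2" using sd1 sd2 sqi_integrable by auto
  have s1p: "s1 > 0" and s1q: "s1^2 = var M d1" using p1 unfolding s1_def d1_def by auto
  have s2p: "s2 > 0" and s2q: "s2^2 = var M d2" using p2 unfolding s2_def d2_def by auto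
  have vh1: "var M h1 = var M d1"
  proof -
    have e: "\<And>v. h1 v = 1 * d1 v + c1" using h1 unfolding d1_def by simp
    have "var M h1 = cov M d1 h1" unfolding var_cov using cov_affine_left[OF id1(1) e] by simp
    also have "\<dots> = cov M h1 d1" by (rule cov_comm)
    also have "\<dots> = cov M d1 d1" using cov_affine_left[OF id1(1) e] by simp
    finally show ?thesis by (simp add: var_cov)
  qed
  have vh2: "var M h2 = var M d2"
  proof -
    have e: "\<And>v. h2 v = 1 * d2 v + c2" using h2 unfolding d2_def by simp
    have "var M h2 = cov M d2 h2" unfolding var_cov using cov_affine_left[OF id1(2) e] by simp
    also have "\<dots> = cov M h2 d2" by (rule cov_comm)
    also have "\<dots> = cov M d2 d2" using cov_affine_left[OF id1(2) e] by simp
    finally show ?thesis by (simp add: var_cov)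
  qed
  define z1 where "z1 = (\<lambda>v. (h1 v - expect M h1) / sqrt (var M h1))"
  define z2 where "z2 = (\<lambda>v. (h2 v - expect M h2) / sqrt (var M h2))"
  have ez1: "z1 v = (1/s1) * d1 v + (c1 - expect M h1) / s1" for v
  proof -
    have "h1 v = d1 v + c1" using h1 unfolding d1_def by simp
    thus ?thesis unfolding z1_def vh1 s1_def[symmetric] using s1p by (simp add: field_simps)
  qed
  have ez2: "z2 v = (1/s2) * d2 v + (c2 - expect M h2) / s2" for v
  proof -
    have "h2 v = d2 v + c2" using h2 unfolding d2_def by simp
    thus ?thesis unfolding z2_def vh2 s2_def[symmetric] using s2p by (simp add: field_simps)
  qed
  have C: "cov M z1 z2 = cov M d1 d2 / (s1 * s2)"
  proof -
    have "cov M z1 z2 = (1/s1) * cov M d1 z2" by (rule cov_affine_left[OF id1(1) ez1])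
    also have "cov M d1 z2 = cov M z2 d1" by (rule cov_comm)
    also have "\<dots> = (1/s2) * cov M d2 d1" by (rule cov_affine_left[OF id1(2) ez2])
    finally show ?thesis by (simp add: cov_comm[of M d2 d1])
  qed
  define A where "A = (\<lambda>v. X1 v / s1 - Y1 v / s2)"
  define B where "B = (\<lambda>v. X2 v / s1 - Y2 v / s2)"
  have sA: "sqi M A" unfolding A_def divide_inverse
    by (rule sqi_diff) (simp_all add: mult.commute[of _ "inverse _"] sqi_cmult x1 y1)
  have sB: "sqi M B" unfolding B_def divide_inverse
    by (rule sqi_diff) (simp_all add: mult.commute[of _ "inverse _"] sqi_cmult x2 y2)
  have vA: "var M A \<le> \<epsilon>^2"
  proof -
    have "sqrt (var M A) \<le> \<epsilon>" using a unfolding A_def s1_def s2_def d1_def d2_def .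
    moreover have "sqrt (var M A) \<ge> 0" by (rule real_sqrt_ge_zero[OF var_nonneg])
    ultimately have "(sqrt (var M A))^2 \<le> \<epsilon>^2" using power_mono by blast
    moreover have "(sqrt (var M A))^2 = var M A" by (rule real_sqrt_pow2[OF var_nonneg])
    ultimately show ?thesis by simp
  qed
  have vB: "var M B \<le> \<epsilon>^2"
  proof -
    have "sqrt (var M B) \<le> \<epsilon>" using b unfolding B_def s1_def s2_def d1_def d2_def .
    moreover have "sqrt (var M B) \<ge> 0" by (rule real_sqrt_ge_zero[OF var_nonneg])
    ultimately have "(sqrt (var M B))^2 \<le> \<epsilon>^2" using power_mono by blast
    moreover have "(sqrt (var M B))^2 = var M B" by (rule real_sqrt_pow2[OF var_nonneg])
    ultimately show ?thesis by simp
  qed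
  define H where "H = (\<lambda>v. d1 v / s1 - d2 v / s2)"
  have H1: "var M H = 1^2 * var M A + (-1)^2 * var M B + 2 * 1 * (-1) * cov M A B"
    by (rule var_lin[OF sA sB]) (simp add: H_def A_def B_def d1_def d2_def diff_divide_distrib)
  have H2: "var M H = (1/s1)^2 * var M d1 + (-1/s2)^2 * var M d2 + 2 * (1/s1) * (-1/s2) * cov M d1 d2"
    by (rule var_lin[OF sd1 sd2]) (simp add: H_def)
  have H3: "var M (\<lambda>v. A v + B v) = 1^2 * var M A + 1^2 * var M B + 2 * 1 * 1 * cov M A B"
    by (rule var_lin[OF sA sB]) simp
  have "var M (\<lambda>v. A v + B v) \<ge> 0" by (rule var_nonneg)
  hence "var M H \<le> 4 * \<epsilon>^2" using H1 H3 vA vB by simp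
  moreover have "var M H = 2 - 2 * cov M z1 z2"
  proof -
    have "(1/s1)^2 * var M d1 = 1" unfolding s1q[symmetric] using s1p by (simp add: power_divide)
    moreover have "(-1/s2)^2 * var M d2 = 1" unfolding s2q[symmetric] using s2p by (simp add: power_divide)
    moreover have "2 * (1/s1) * (-1/s2) * cov M d1 d2 = - 2 * cov M z1 z2"
      unfolding C by simp
    ultimately show ?thesis using H2 by simp
  qed
  ultimately have "cov M z1 z2 \<ge> 1 - 2 * \<epsilon>^2" by simp
  thus ?thesis unfolding z1_def z2_def .
qed

end



lemma sqi_standardize:
  assumes P: "prob_space P" and s: "sqi P (\<lambda>v. z v $ i)"
  shows "sqi P (\<lambda>v. standardize P z v $ i)"
proof (rule prob_space.sqi_affine[OF P s])
  fix v
  show "standardize P z v $ i = (1 / sqrt (var P (\<lambda>v. z v $ i))) * z v $ i +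
     (- expect P (\<lambda>v. z v $ i) / sqrt (var P (\<lambda>v. z v $ i)))"
    unfolding standardize_def by (simp add: diff_divide_distrib)
qed

lemma cov_trace:
  fixes zs ws :: "'a \<Rightarrow> real^'m"
  assumes P: "prob_space P" and sz: "\<And>a. sqi P (\<lambda>v. zs v $ a)" and sw: "\<And>b. sqi P (\<lambda>v. ws v $ b)"
  shows "(\<Sum>i\<in>UNIV. cov P (\<lambda>v. column i U \<bullet> zs v) (\<lambda>v. column i V \<bullet> ws v))
       = tr (transpose U ** cross_cov P zs ws ** V)"
proof -
  have col: "\<And>i Q (x :: real^'m). column i Q \<bullet> x = (\<Sum>a\<in>UNIV. Q $ a $ i * x $ a)"
    by (simp add: inner_vec_def column_def)
  have trm: "cov P (\<lambda>v. column i U \<bullet> zs v) (\<lambda>v. column i V \<bullet> ws v)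
      = (\<Sum>a\<in>UNIV. U $ a $ i * (\<Sum>b\<in>UNIV. V $ b $ i * cov P (\<lambda>v. zs v $ a) (\<lambda>v. ws v $ b)))" for i
  proof -
    have sW: "sqi P (\<lambda>v. \<Sum>b\<in>UNIV. V $ b $ i * ws v $ b)"
      by (rule sqi_sum) (auto intro: sqi_cmult sw)
    have "cov P (\<lambda>v. column i U \<bullet> zs v) (\<lambda>v. column i V \<bullet> ws v)
       = cov P (\<lambda>v. \<Sum>a\<in>UNIV. U $ a $ i * zs v $ a) (\<lambda>v. \<Sum>b\<in>UNIV. V $ b $ i * ws v $ b)"
      by (simp only: col)
    also have "\<dots> = (\<Sum>a\<in>UNIV. U $ a $ i * cov P (\<lambda>v. zs v $ a) (\<lambda>v. \<Sum>b\<in>UNIV. V $ b $ i * ws v $ b))"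
      by (rule prob_space.cov_sum_left[OF P, of UNIV "\<lambda>a v. zs v $ a"]) (auto intro: sz sW)
    also have "\<dots> = (\<Sum>a\<in>UNIV. U $ a $ i * (\<Sum>b\<in>UNIV. V $ b $ i * cov P (\<lambda>v. zs v $ a) (\<lambda>v. ws v $ b)))"
    proof (rule sum.cong[OF refl])
      fix a
      have "cov P (\<lambda>v. zs v $ a) (\<lambda>v. \<Sum>b\<in>UNIV. V $ b $ i * ws v $ b)
         = cov P (\<lambda>v. \<Sum>b\<in>UNIV. V $ b $ i * ws v $ b) (\<lambda>v. zs v $ a)" by (rule cov_comm)
      also have "\<dots> = (\<Sum>b\<in>UNIV. V $ b $ i * cov P (\<lambda>v. ws v $ b) (\<lambda>v. zs v $ a))"
        by (rule prob_space.cov_sum_left[OF P, of UNIV "\<lambda>b v. ws v $ b"]) (auto intro: sz sw)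
      also have "\<dots> = (\<Sum>b\<in>UNIV. V $ b $ i * cov P (\<lambda>v. zs v $ a) (\<lambda>v. ws v $ b))"
        by (simp add: cov_comm)
      finally show "U $ a $ i * cov P (\<lambda>v. zs v $ a) (\<lambda>v. \<Sum>b\<in>UNIV. V $ b $ i * ws v $ b)
         = U $ a $ i * (\<Sum>b\<in>UNIV. V $ b $ i * cov P (\<lambda>v. zs v $ a) (\<lambda>v. ws v $ b))" by simp
    qed
    finally show ?thesis .
  qed
  have diag: "(transpose U ** cross_cov P zs ws ** V) $ i $ i
      = (\<Sum>a\<in>UNIV. U $ a $ i * (\<Sum>b\<in>UNIV. V $ b $ i * cov P (\<lambda>v. zs v $ a) (\<lambda>v. ws v $ b)))" for i
  proof -
    have "(transpose U ** cross_cov P zs ws ** V) $ i $ i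
       = (\<Sum>b\<in>UNIV. (\<Sum>a\<in>UNIV. U $ a $ i * cov P (\<lambda>v. zs v $ a) (\<lambda>v. ws v $ b)) * V $ b $ i)"
      by (simp add: matrix_matrix_mult_def transpose_def cross_cov_def)
    also have "\<dots> = (\<Sum>b\<in>UNIV. \<Sum>a\<in>UNIV. U $ a $ i * cov P (\<lambda>v. zs v $ a) (\<lambda>v. ws v $ b) * V $ b $ i)"
      by (simp add: sum_distrib_right)
    also have "\<dots> = (\<Sum>a\<in>UNIV. \<Sum>b\<in>UNIV. U $ a $ i * cov P (\<lambda>v. zs v $ a) (\<lambda>v. ws v $ b) * V $ b $ i)"
      by (rule sum.swap)
    also have "\<dots> = (\<Sum>a\<in>UNIV. U $ a $ i * (\<Sum>b\<in>UNIV. V $ b $ i * cov P (\<lambda>v. zs v $ a) (\<lambda>v. ws v $ b)))"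
      by (simp add: sum_distrib_left mult_ac)
    finally show ?thesis .
  qed
  show ?thesis unfolding tr_def by (simp add: trm diag)
qed


lemma m_SVD_bounds:
  fixes z w :: "'a \<Rightarrow> real^'m"
  assumes P: "prob_space P" and sz: "\<And>i. sqi P (\<lambda>v. z v $ i)" and sw: "\<And>i. sqi P (\<lambda>v. w v $ i)"
  shows "m_SVD P z w \<ge> tr (cross_cov P (standardize P z) (standardize P w)) / real CARD('m)
         \<and> m_SVD P z w \<ge> 0"
proof -
  define zs where "zs = standardize P z"
  define ws where "ws = standardize P w"
  define S where "S = cross_cov P zs ws"
  have szs: "\<And>a. sqi P (\<lambda>v. zs v $ a)" unfolding zs_def by (rule sqi_standardize[OF P sz])
  have sws: "\<And>a. sqi P (\<lambda>v. ws v $ a)" unfolding ws_def by (rule sqi_standardize[OF P sw])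
  define Pr where "Pr s \<longleftrightarrow> (\<exists>U V :: real^'m^'m.
        orthogonal_matrix U \<and> orthogonal_matrix V \<and>
        (\<forall>i j. i \<noteq> j \<longrightarrow> (transpose U ** S ** V) $ i $ j = 0) \<and>
        (\<forall>i. (transpose U ** S ** V) $ i $ i \<ge> 0) \<and>
        s = (1 / real CARD('m)) *
            (\<Sum>i\<in>UNIV. cov P (\<lambda>v. column i U \<bullet> zs v) (\<lambda>v. column i V \<bullet> ws v)))" for s
  have mdef: "m_SVD P z w = (THE s. Pr s)"
    unfolding m_SVD_def Pr_def zs_def ws_def S_def Let_def ..
  have Pr_iff: "Pr s \<longleftrightarrow> (\<exists>U V :: real^'m^'m.
        orthogonal_matrix U \<and> orthogonal_matrix V \<and>
        (\<forall>i j. i \<noteq> j \<longrightarrow> (transpose U ** S ** V) $ i $ j = 0) \<and>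
        (\<forall>i. (transpose U ** S ** V) $ i $ i \<ge> 0) \<and>
        s = (1 / real CARD('m)) * tr (transpose U ** S ** V))" for s
    unfolding Pr_def S_def cov_trace[OF P szs sws] ..
  have ex: "\<exists>!s. Pr s"
  proof -
    obtain U V :: "real^'m^'m" where UV: "orthogonal_matrix U" "orthogonal_matrix V"
        "\<forall>i j. i \<noteq> j \<longrightarrow> (transpose U ** S ** V) $ i $ j = 0"
        "\<forall>i. (transpose U ** S ** V) $ i $ i \<ge> 0"
      using svd_exists[of S] by blast
    have "Pr ((1 / real CARD('m)) * tr (transpose U ** S ** V))"
      unfolding Pr_iff using UV by blast
    moreover have "s1 = s2" if H1: "Pr s1" and H2: "Pr s2" for s1 s2
    proof -
      obtain U1 V1 :: "real^'m^'m" where A: "orthogonal_matrix U1" "orthogonal_matrix V1"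
        "\<forall>i j. i \<noteq> j \<longrightarrow> (transpose U1 ** S ** V1) $ i $ j = 0"
        "\<forall>i. (transpose U1 ** S ** V1) $ i $ i \<ge> 0"
        "s1 = (1 / real CARD('m)) * tr (transpose U1 ** S ** V1)"
        using H1 unfolding Pr_iff by blast
      obtain U2 V2 :: "real^'m^'m" where B: "orthogonal_matrix U2" "orthogonal_matrix V2"
        "\<forall>i j. i \<noteq> j \<longrightarrow> (transpose U2 ** S ** V2) $ i $ j = 0"
        "\<forall>i. (transpose U2 ** S ** V2) $ i $ i \<ge> 0"
        "s2 = (1 / real CARD('m)) * tr (transpose U2 ** S ** V2)"
        using H2 unfolding Pr_iff by blast
      have "tr (transpose U2 ** S ** V2) \<le> tr (transpose U1 ** S ** V1)"
        by (rule svd_trace_max) (use A B in auto)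
      moreover have "tr (transpose U1 ** S ** V1) \<le> tr (transpose U2 ** S ** V2)"
        by (rule svd_trace_max) (use A B in auto)
      ultimately show ?thesis using A(5) B(5) by simp
    qed
    ultimately show ?thesis by blast
  qed
  have "Pr (m_SVD P z w)" unfolding mdef by (rule theI'[OF ex])
  then obtain U V :: "real^'m^'m" where A: "orthogonal_matrix U" "orthogonal_matrix V"
        "\<forall>i j. i \<noteq> j \<longrightarrow> (transpose U ** S ** V) $ i $ j = 0"
        "\<forall>i. (transpose U ** S ** V) $ i $ i \<ge> 0"
        "m_SVD P z w = (1 / real CARD('m)) * tr (transpose U ** S ** V)"
    unfolding Pr_iff by blast
  have "tr (mat 1 ** S ** mat 1) \<le> tr (transpose U ** S ** V)"
    by (rule svd_trace_max) (use A in \<open>auto simp: orthogonal_matrix_id\<close>)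
  hence t1: "tr S \<le> tr (transpose U ** S ** V)" by simp
  have t2: "tr (transpose U ** S ** V) \<ge> 0" unfolding tr_def using A(4) by (simp add: sum_nonneg)
  show ?thesis unfolding A(5) using t1 t2 unfolding S_def zs_def ws_def
    by (auto simp: divide_right_mono)
qed


lemma side_bound:
  fixes z1 z2 :: "'a \<Rightarrow> real^'m"
  assumes P: "prob_space P"
    and x1: "\<And>i. sqi P (X1 i)" and x2: "\<And>i. sqi P (X2 i)"
    and y1: "\<And>i. sqi P (Y1 i)" and y2: "\<And>i. sqi P (Y2 i)"
    and h1: "\<And>i v. z1 v $ i = X1 i v - X2 i v + c1 i"
    and h2: "\<And>i v. z2 v $ i = Y1 i v - Y2 i v + c2 i"
    and p1: "\<And>i. var P (\<lambda>v. X1 i v - X2 i v) > 0"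
    and p2: "\<And>i. var P (\<lambda>v. Y1 i v - Y2 i v) > 0"
    and a: "\<And>i. sqrt (var P (\<lambda>v. X1 i v / sqrt (var P (\<lambda>v. X1 i v - X2 i v)) - Y1 i v / sqrt (var P (\<lambda>v. Y1 i v - Y2 i v)))) \<le> \<epsilon>"
    and b: "\<And>i. sqrt (var P (\<lambda>v. X2 i v / sqrt (var P (\<lambda>v. X1 i v - X2 i v)) - Y2 i v / sqrt (var P (\<lambda>v. Y1 i v - Y2 i v)))) \<le> \<epsilon>"
  shows "d_SVD P z1 z2 \<le> 2 * real CARD('m) * \<epsilon>"
proof -
  have sz1: "sqi P (\<lambda>v. z1 v $ i)" for i
    by (rule prob_space.sqi_affine[OF P prob_space.sqi_diff[OF P x1 x2], where a=1 and c="c1 i"]) (simp add: h1)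
  have sz2: "sqi P (\<lambda>v. z2 v $ i)" for i
    by (rule prob_space.sqi_affine[OF P prob_space.sqi_diff[OF P y1 y2], where a=1 and c="c2 i"]) (simp add: h2)
  note mb = m_SVD_bounds[OF P sz1 sz2]
  have eps: "\<epsilon> \<ge> 0" using a[of undefined] by (meson order_trans real_sqrt_ge_zero var_nonneg)
  have ci: "cov P (\<lambda>v. standardize P z1 v $ i) (\<lambda>v. standardize P z2 v $ i) \<ge> 1 - 2 * \<epsilon>^2" for i
  proof -
    have "cov P (\<lambda>v. (z1 v $ i - expect P (\<lambda>v. z1 v $ i)) / sqrt (var P (\<lambda>v. z1 v $ i)))
                 (\<lambda>v. (z2 v $ i - expect P (\<lambda>v. z2 v $ i)) / sqrt (var P (\<lambda>v. z2 v $ i))) \<ge> 1 - 2 * \<epsilon>^2"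
      by (rule prob_space.key_cov[OF P x1[of i] x2[of i] y1[of i] y2[of i], where ?c1.0 = "c1 i" and ?c2.0 = "c2 i"])
         (use h1 h2 p1 p2 a b in auto)
    thus ?thesis unfolding standardize_def by simp
  qed
  have M: "real CARD('m) > 0" by (simp add: card_gt_0_iff)
  have "(\<Sum>i\<in>(UNIV::'m set). 1 - 2 * \<epsilon>^2) \<le> (\<Sum>i\<in>UNIV. cov P (\<lambda>v. standardize P z1 v $ i) (\<lambda>v. standardize P z2 v $ i))"
    by (rule sum_mono) (rule ci)
  also have "\<dots> = tr (cross_cov P (standardize P z1) (standardize P z2))"
    unfolding tr_def cross_cov_def by simp
  finally have "tr (cross_cov P (standardize P z1) (standardize P z2)) \<ge> (\<Sum>i\<in>(UNIV::'m set). 1 - 2 * \<epsilon>^2)" .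
  hence "tr (cross_cov P (standardize P z1) (standardize P z2)) \<ge> real CARD('m) * (1 - 2 * \<epsilon>^2)" by simp
  hence "tr (cross_cov P (standardize P z1) (standardize P z2)) / real CARD('m) \<ge> 1 - 2 * \<epsilon>^2"
    using M by (simp add: pos_le_divide_eq mult.commute)
  hence m1: "m_SVD P z1 z2 \<ge> 1 - 2 * \<epsilon>^2" and m0: "m_SVD P z1 z2 \<ge> 0" using mb by auto
  have M1: "real CARD('m) \<ge> 1"
  proof -
    have "CARD('m) \<ge> 1" using card_gt_0_iff[of "UNIV::'m set"] by auto
    thus ?thesis by simp
  qed
  show ?thesis
  proof (cases "\<epsilon> \<ge> 1/2")
    case True
    have "2 * real CARD('m) * \<epsilon> \<ge> 2 * 1 * (1/2)"
      using True M1 eps by (intro mult_mono) auto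
    thus ?thesis unfolding d_SVD_def using m0 by simp
  next
    case False
    have "(2 * \<epsilon>) * \<epsilon> \<le> 1 * \<epsilon>" using False eps by (intro mult_right_mono) auto
    hence "2 * \<epsilon>^2 \<le> \<epsilon>" by (simp add: power2_eq_square mult.assoc)
    moreover have "1 * \<epsilon> \<le> (2 * real CARD('m)) * \<epsilon>" using M1 eps by (intro mult_right_mono) linarith+
    ultimately have "2 * \<epsilon>^2 \<le> 2 * real CARD('m) * \<epsilon>" by simp
    thus ?thesis unfolding d_SVD_def using m1 by simp
  qed
qed


lemma ln_model_p:
  fixes f :: "'x \<Rightarrow> real^'m" and g :: "'y::finite \<Rightarrow> real^'m"
  shows "ln (model_p f g x y) = f x \<bullet> g y - ln (\<Sum>y'\<in>UNIV. exp (f x \<bullet> g y'))"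
proof -
  have "(\<Sum>y'\<in>(UNIV::'y set). exp (f x \<bullet> g y')) > 0" by (rule sum_pos) auto
  thus ?thesis unfolding model_p_def by (simp add: ln_div)
qed

lemma tmv: "(transpose (\<chi> a i. G i $ a) *v (u :: real^'m)) $ i = G i \<bullet> u"
  by (simp add: matrix_vector_mult_def transpose_def inner_vec_def mult.commute)

lemma unif_sqi: "sqi (unif :: 'y::finite measure) X"
  unfolding sqi_def unif_def by (auto intro: integrable_measure_pmf_finite)

lemma unif_prob: "prob_space (unif :: 'y::finite measure)"
  unfolding unif_def by (rule prob_space_measure_pmf)

lemma unif_var_pos:
  assumes nc: "\<not> (\<exists>c. \<forall>y. X y = c)"
  shows "var (unif :: 'y::finite measure) X > 0"
proof -
  define m where "m = expect unif X"
  have "var unif X = integral\<^sup>L (measure_pmf (pmf_of_set (UNIV :: 'y set))) (\<lambda>w. (X w - m)^2)"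
    unfolding var_def m_def expect_def unif_def ..
  also have "\<dots> = (\<Sum>y\<in>UNIV. (X y - m)^2) / real CARD('y)"
    by (rule integral_pmf_of_set) auto
  finally have v: "var unif X = (\<Sum>y\<in>UNIV. (X y - m)^2) / real CARD('y)" .
  have "var unif X \<noteq> 0"
  proof
    assume "var unif X = 0"
    hence "(\<Sum>y\<in>UNIV. (X y - m)^2) = 0" using v by (simp add: card_gt_0_iff)
    hence "\<forall>y\<in>UNIV. (X y - m)^2 = 0" by (subst sum_nonneg_eq_0_iff[symmetric]) auto
    hence "\<forall>y. X y = m" by simp
    with nc show False by blast
  qed
  with var_nonneg[of unif X] show ?thesis by simp
qed

lemma Max4_le: "Max {a, b, c, d} \<le> (e::real) \<Longrightarrow> a \<le> e \<and> b \<le> e"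
  by (meson Max_ge finite.emptyI finite.insertI insertI1 insertI2 order_trans)

lemma Max_img_le: "finite A \<Longrightarrow> x \<in> A \<Longrightarrow> Max (F ` A) \<le> (e::real) \<Longrightarrow> F x \<le> e"
  by (meson Max_ge finite_imageI imageI order_trans)

theorem mainTheorem10:
  fixes D :: "'x measure"
    and f f' :: "'x \<Rightarrow> real^'m"
    and g g' :: "'y::finite \<Rightarrow> real^'m"
    and x0 :: 'x and y0 :: 'y
    and XL :: "'x set" and YL :: "'y set"
    and xs :: "'m \<Rightarrow> 'x" and ys :: "'m \<Rightarrow> 'y"
    and lam \<epsilon> :: real
  assumes D: "prob_space D" "space D = UNIV"
    and XL: "finite XL" "x0 \<in> XL"
    and YL: "y0 \<in> YL" "card (UNIV - YL) = 1"
    and ys: "inj ys" "\<forall>i. ys i \<in> YL - {y0}"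
    and xs: "inj xs" "\<forall>i. xs i \<in> XL - {x0}"
    and invL: "invertible (\<chi> a i. (g (ys i) - g y0) $ a)"
    and invL': "invertible (\<chi> a i. (g' (ys i) - g' y0) $ a)"
    and invN: "invertible (\<chi> a i. (f (xs i) - f x0) $ a)"
    and invN': "invertible (\<chi> a i. (f' (xs i) - f' x0) $ a)"
    and adm: "admissible D x0 y0 XL YL (model_p f g)"
    and adm': "admissible D x0 y0 XL YL (model_p f' g')"
    and nonsing:
      "let L = (\<chi> a i. (g (ys i) - g y0) $ a);
           L' = (\<chi> a i. (g' (ys i) - g' y0) $ a);
           N = (\<chi> a i. (f (xs i) - f x0) $ a);
           N' = (\<chi> a i. (f' (xs i) - f' x0) $ a);
           z1 = (\<lambda>x. transpose L *v f x); z2 = (\<lambda>x. transpose L' *v f' x);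
           w1 = (\<lambda>y. transpose N *v g y); w2 = (\<lambda>y. transpose N' *v g' y)
       in invertible (cross_cov D (standardize D z1) (standardize D z1)) \<and>
          invertible (cross_cov unif (standardize unif w1) (standardize unif w1)) \<and>
          invertible (cross_cov D (standardize D z1) (standardize D z2)) \<and>
          invertible (cross_cov unif (standardize unif w1) (standardize unif w2))"
    and lam: "lam > 0" and eps: "\<epsilon> \<ge> 0"
    and dist: "d_LLV D x0 y0 XL YL lam (model_p f g) (model_p f' g') \<le> \<epsilon>"
  shows "let L = (\<chi> a i. (g (ys i) - g y0) $ a);
             L' = (\<chi> a i. (g' (ys i) - g' y0) $ a);
             N = (\<chi> a i. (f (xs i) - f x0) $ a);
             N' = (\<chi> a i. (f' (xs i) - f' x0) $ a);
             z1 = (\<lambda>x. transpose L *v f x); z2 = (\<lambda>x. transpose L' *v f' x);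
             w1 = (\<lambda>y. transpose N *v g y); w2 = (\<lambda>y. transpose N' *v g' y)
         in max (d_SVD D z1 z2) (d_SVD unif w1 w2) \<le> 2 * real CARD('m) * \<epsilon>"
proof -
  define p where "p = model_p f g"
  define p' where "p' = model_p f' g'"
  define Z where "Z x = ln (\<Sum>y'\<in>UNIV. exp (f x \<bullet> g y'))" for x
  define Z' where "Z' x = ln (\<Sum>y'\<in>UNIV. exp (f' x \<bullet> g' y'))" for x
  have lnp: "ln (p x y) = f x \<bullet> g y - Z x" for x y unfolding p_def Z_def by (rule ln_model_p)
  have lnp': "ln (p' x y) = f' x \<bullet> g' y - Z' x" for x y unfolding p'_def Z'_def by (rule ln_model_p)
  note adm = adm[folded p_def] and adm' = adm'[folded p'_def]
  have sq: "sqi D (\<lambda>x. ln (p x y))" for y using adm unfolding admissible_def sqi_def by auto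
  have sq': "sqi D (\<lambda>x. ln (p' x y))" for y using adm' unfolding admissible_def sqi_def by auto
  have posD: "var D (\<lambda>x. ln (p x (ys i)) - ln (p x y0)) > 0" for i
    using adm ys(2) unfolding admissible_def by blast
  have posD': "var D (\<lambda>x. ln (p' x (ys i)) - ln (p' x y0)) > 0" for i
    using adm' ys(2) unfolding admissible_def by blast
  have posU: "var unif (\<lambda>y. ln (p (xs i) y) - ln (p x0 y)) > 0" for i
    by (rule unif_var_pos) (use adm xs(2) in \<open>unfold admissible_def, blast\<close>)
  have posU': "var unif (\<lambda>y. ln (p' (xs i) y) - ln (p' x0 y)) > 0" for i
    by (rule unif_var_pos) (use adm' xs(2) in \<open>unfold admissible_def, blast\<close>)
  have dl: "Max {Max ((\<lambda>y. max
              (sqrt (var D (\<lambda>x. ln (p x y) / psi_x D y0 p y - ln (p' x y) / psi_x D y0 p' y)))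
              (sqrt (var D (\<lambda>x. ln (p x y0) / psi_x D y0 p y - ln (p' x y0) / psi_x D y0 p' y))))
              ` (YL - {y0})),
       Max ((\<lambda>x. max
              (sqrt (var unif (\<lambda>y. ln (p x y) / psi_y x0 p x - ln (p' x y) / psi_y x0 p' x)))
              (sqrt (var unif (\<lambda>y. ln (p x0 y) / psi_y x0 p x - ln (p' x0 y) / psi_y x0 p' x))))
              ` (XL - {x0})),
       lam * Max ((\<lambda>y. \<bar>psi_x D y0 p y - psi_x D y0 p' y\<bar>) ` (YL - {y0})),
       lam * Max ((\<lambda>x. \<bar>psi_y x0 p x - psi_y x0 p' x\<bar>) ` (XL - {x0}))} \<le> \<epsilon>"
    using dist unfolding d_LLV_def Let_def p_def p'_def .
  note dl2 = Max4_le[OF dl]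
  have T1: "sqrt (var D (\<lambda>x. ln (p x y) / psi_x D y0 p y - ln (p' x y) / psi_x D y0 p' y)) \<le> \<epsilon> \<and>
            sqrt (var D (\<lambda>x. ln (p x y0) / psi_x D y0 p y - ln (p' x y0) / psi_x D y0 p' y)) \<le> \<epsilon>"
    if "y \<in> YL - {y0}" for y
    using Max_img_le[OF _ that conjunct1[OF dl2]] by simp
  have T2: "sqrt (var unif (\<lambda>y. ln (p x y) / psi_y x0 p x - ln (p' x y) / psi_y x0 p' x)) \<le> \<epsilon> \<and>
            sqrt (var unif (\<lambda>y. ln (p x0 y) / psi_y x0 p x - ln (p' x0 y) / psi_y x0 p' x)) \<le> \<epsilon>"
    if "x \<in> XL - {x0}" for x
    using Max_img_le[OF _ that conjunct2[OF dl2]] XL(1) by simp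
  have sideD: "d_SVD D (\<lambda>x. transpose (\<chi> a i. (g (ys i) - g y0) $ a) *v f x)
                       (\<lambda>x. transpose (\<chi> a i. (g' (ys i) - g' y0) $ a) *v f' x) \<le> 2 * real CARD('m) * \<epsilon>"
  proof (rule side_bound[OF D(1), where ?X1.0 = "\<lambda>i x. ln (p x (ys i))" and ?X2.0 = "\<lambda>i x. ln (p x y0)"
        and ?Y1.0 = "\<lambda>i x. ln (p' x (ys i))" and ?Y2.0 = "\<lambda>i x. ln (p' x y0)" and ?c1.0 = "\<lambda>i. 0" and ?c2.0 = "\<lambda>i. 0"])
    fix i v
    show "(transpose (\<chi> a i. (g (ys i) - g y0) $ a) *v f v) $ i = ln (p v (ys i)) - ln (p v y0) + 0"
      unfolding tmv lnp by (simp add: inner_diff_left inner_diff_right inner_commute)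
    show "(transpose (\<chi> a i. (g' (ys i) - g' y0) $ a) *v f' v) $ i = ln (p' v (ys i)) - ln (p' v y0) + 0"
      unfolding tmv lnp' by (simp add: inner_diff_left inner_diff_right inner_commute)
  next
    fix i
    show "sqrt (var D (\<lambda>v. ln (p v (ys i)) / sqrt (var D (\<lambda>v. ln (p v (ys i)) - ln (p v y0))) -
            ln (p' v (ys i)) / sqrt (var D (\<lambda>v. ln (p' v (ys i)) - ln (p' v y0))))) \<le> \<epsilon>"
      using T1[of "ys i"] ys(2) unfolding psi_x_def by blast
    show "sqrt (var D (\<lambda>v. ln (p v y0) / sqrt (var D (\<lambda>v. ln (p v (ys i)) - ln (p v y0))) -
            ln (p' v y0) / sqrt (var D (\<lambda>v. ln (p' v (ys i)) - ln (p' v y0))))) \<le> \<epsilon>"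
      using T1[of "ys i"] ys(2) unfolding psi_x_def by blast
  qed (use sq sq' posD posD' in auto)
  have sideU: "d_SVD unif (\<lambda>y. transpose (\<chi> a i. (f (xs i) - f x0) $ a) *v g y)
                       (\<lambda>y. transpose (\<chi> a i. (f' (xs i) - f' x0) $ a) *v g' y) \<le> 2 * real CARD('m) * \<epsilon>"
  proof (rule side_bound[OF unif_prob, where ?X1.0 = "\<lambda>i y. ln (p (xs i) y)" and ?X2.0 = "\<lambda>i y. ln (p x0 y)"
        and ?Y1.0 = "\<lambda>i y. ln (p' (xs i) y)" and ?Y2.0 = "\<lambda>i y. ln (p' x0 y)"
        and ?c1.0 = "\<lambda>i. Z (xs i) - Z x0" and ?c2.0 = "\<lambda>i. Z' (xs i) - Z' x0"])
    fix i v
    show "(transpose (\<chi> a i. (f (xs i) - f x0) $ a) *v g v) $ i = ln (p (xs i) v) - ln (p x0 v) + (Z (xs i) - Z x0)"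
      unfolding tmv lnp by (simp add: inner_diff_left)
    show "(transpose (\<chi> a i. (f' (xs i) - f' x0) $ a) *v g' v) $ i = ln (p' (xs i) v) - ln (p' x0 v) + (Z' (xs i) - Z' x0)"
      unfolding tmv lnp' by (simp add: inner_diff_left)
  next
    fix i
    show "sqrt (var unif (\<lambda>v. ln (p (xs i) v) / sqrt (var unif (\<lambda>v. ln (p (xs i) v) - ln (p x0 v))) -
            ln (p' (xs i) v) / sqrt (var unif (\<lambda>v. ln (p' (xs i) v) - ln (p' x0 v))))) \<le> \<epsilon>"
      using T2[of "xs i"] xs(2) unfolding psi_y_def by blast
    show "sqrt (var unif (\<lambda>v. ln (p x0 v) / sqrt (var unif (\<lambda>v. ln (p (xs i) v) - ln (p x0 v))) -
            ln (p' x0 v) / sqrt (var unif (\<lambda>v. ln (p' (xs i) v) - ln (p' x0 v))))) \<le> \<epsilon>"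
      using T2[of "xs i"] xs(2) unfolding psi_y_def by blast
  qed (use posU posU' in \<open>auto simp: unif_sqi\<close>)
  show ?thesis unfolding Let_def using sideD sideU by simp
qed

end
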